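(* Let $\mathcal{A}$ be a set of $\mathfrak{c}$ many Turing degrees. Then there is $\mathcal{S}\subseteq\mathcal{A}$ with $|\mathcal{S}|=\mathfrak{c}$ such that $\mathbb{R}_{\mathcal{S}}$ has the following property: for every collection of $\mathfrak{c}$ many pairwise disjoint pairs $(x,y)$ of elements of $\mathbb{R}_{\mathcal{S}}$ such that in each pair $x$ and $y$ have different Turing degrees, there are pairs $(x_1,y_1),(x_2,y_2)$ in the collection with $x_1<x_2$ and $y_1<y_2$, and pairs $(w_1,z_1),(w_2,z_2)$ in the collection with $w_1<w_2$ but $z_1>z_2$ (i.e. $\mathbb{R}_{\mathcal{S}}$ is layered $\mathfrak{c}$-$2$-entangled with respect to Turing degree).
   Context: $\mathfrak{c}=2^{\aleph_0}$. $\mathbb{R}_{\mathcal{S}}$ is the set of reals whose Turing degree lies in $\mathcal{S}$. A collection of pairs $\{(x_\alpha,y_\alpha)\}$ is pairwise disjoint if $x_\alpha\ne y_\alpha$ for all $\alpha$ and $\{x_\alpha,y_\alpha\}\cap\{x_\beta,y_\beta\}=\emptyset$ for $\alpha\neq\beta$. *)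

theory Defs
  imports Complex_Main "HOL-Library.Equipollence" "HOL-Library.Nat_Bijection"
begin

datatype recf = Zero | Succ | Proj nat | Orc | Comp recf "recf list"
  | PrimRec recf recf | Mu recf

definition arg :: "nat list \<Rightarrow> nat \<Rightarrow> nat" where
  "arg xs i = (if i < length xs then xs ! i else 0)"

inductive eval :: "nat set \<Rightarrow> recf \<Rightarrow> nat list \<Rightarrow> nat \<Rightarrow> bool" for A where
  eval_zero: "eval A Zero xs 0"
| eval_succ: "eval A Succ xs (Suc (arg xs 0))"
| eval_proj: "eval A (Proj i) xs (arg xs i)"
| eval_orc: "eval A Orc xs (if arg xs 0 \<in> A then 1 else 0)"
| eval_comp: "length ys = length gs \<Longrightarrow> (\<forall>i<length gs. eval A (gs ! i) xs (ys ! i))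
     \<Longrightarrow> eval A f ys z \<Longrightarrow> eval A (Comp f gs) xs z"
| eval_pr0: "eval A f xs y \<Longrightarrow> eval A (PrimRec f g) (0 # xs) y"
| eval_prS: "eval A (PrimRec f g) (n # xs) y \<Longrightarrow> eval A g (n # y # xs) z
     \<Longrightarrow> eval A (PrimRec f g) (Suc n # xs) z"
| eval_mu: "eval A f (n # xs) 0 \<Longrightarrow> (\<forall>m<n. \<exists>y. y > 0 \<and> eval A f (m # xs) y)
     \<Longrightarrow> eval A (Mu f) xs n"

definition turing_le :: "nat set \<Rightarrow> nat set \<Rightarrow> bool" where
  "turing_le B A \<longleftrightarrow> (\<exists>f. \<forall>n. eval A f [n] (if n \<in> B then 1 else 0))"

definition turing_equiv :: "nat set \<Rightarrow> nat set \<Rightarrow> bool" where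
  "turing_equiv A B \<longleftrightarrow> turing_le A B \<and> turing_le B A"

definition degree_of_set :: "nat set \<Rightarrow> nat set set" where
  "degree_of_set A = {B. turing_equiv B A}"

definition turing_degrees :: "nat set set set" where
  "turing_degrees = range degree_of_set"

text \<open>Explicit coding of rationals: n codes a / (b+1) where (a',b) = prod_decode n
  and a = int_decode a'.  A real x is identified with its (coded) left Dedekind cut.\<close>
definition rat_code :: "nat \<Rightarrow> real" where
  "rat_code n = (case prod_decode n of (a, b) \<Rightarrow> of_int (int_decode a) / real (Suc b))"

definition real_cut :: "real \<Rightarrow> nat set" where
  "real_cut x = {n. rat_code n < x}"

definition tdeg :: "real \<Rightarrow> nat set set" where
  "tdeg x = degree_of_set (real_cut x)"

definition reals_of_degrees :: "nat set set set \<Rightarrow> real set" where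
  "reals_of_degrees S = {x. tdeg x \<in> S}"

end

theory Submission
  imports Defs "HOL-Library.Countable" "HOL-Analysis.Abstract_Topology_2"
begin


instance recf :: countable by countable_datatype

lemma eval_det: "eval A f xs y \<Longrightarrow> eval A f xs y' \<Longrightarrow> y = y'"
proof (induction arbitrary: y' rule: eval.induct)
  case (eval_comp ys gs xs f z)
  from eval_comp.prems obtain ys' where 1: "length ys' = length gs"
    "\<forall>i<length gs. eval A (gs ! i) xs (ys' ! i)" "eval A f ys' y'"
    by (cases rule: eval.cases) auto
  have "ys = ys'" using eval_comp 1 by (intro nth_equalityI) auto
  then show ?case using eval_comp.IH 1 by auto
next
  case (eval_pr0 f xs y g)
  from eval_pr0.prems show ?case by (cases rule: eval.cases) (auto simp: eval_pr0.IH)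
next
  case (eval_prS f g n xs y z)
  from eval_prS.prems obtain y2 where "eval A (PrimRec f g) (n # xs) y2" "eval A g (n # y2 # xs) y'"
    by (cases rule: eval.cases) auto
  then show ?case using eval_prS.IH by metis
next
  case (eval_mu f n xs)
  from eval_mu.prems have 1: "eval A f (y' # xs) 0" "\<forall>m<y'. \<exists>y. y > 0 \<and> eval A f (m # xs) y"
    by (cases rule: eval.cases; auto)+
  show ?case
  proof (rule ccontr)
    assume "n \<noteq> y'"
    then consider "n < y'" | "y' < n" by linarith
    then show False
    proof cases
      case 1
      then obtain y where "y > 0" "eval A f (n # xs) y" using \<open>\<forall>m<y'. _\<close> by blast
      then show False using eval_mu.IH(1) by fastforce
    next
      case 2
      then obtain y where "y > 0" "(eval A f (y' # xs) y \<and> (\<forall>x. eval A f (y' # xs) x \<longrightarrow> y = x))"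
        using eval_mu.IH(2) by blast
      then show False using 1 by auto
    qed
  qed
qed (auto elim: eval.cases)

lemma turing_le_refl: "turing_le X X"
  unfolding turing_le_def
proof (rule exI[of _ Orc], intro allI)
  fix n show "eval X Orc [n] (if n \<in> X then 1 else 0)"
    using eval_orc[of X "[n]"] by (simp add: arg_def)
qed

lemma countable_below: "countable {B. turing_le B X}"
proof -
  have "{B. turing_le B X} \<subseteq> (\<lambda>f. {n. eval X f [n] 1}) ` UNIV"
  proof
    fix B assume "B \<in> {B. turing_le B X}"
    then obtain f where f: "\<forall>n. eval X f [n] (if n \<in> B then 1 else 0)"
      unfolding turing_le_def by auto
    have "B = {n. eval X f [n] 1}"
    proof (intro set_eqI iffI)
      fix n assume "n \<in> B" then show "n \<in> {n. eval X f [n] 1}" using f[rule_format, of n] by simp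
    next
      fix n assume "n \<in> {n. eval X f [n] 1}"
      then have "eval X f [n] 1" by simp
      moreover have "eval X f [n] (if n \<in> B then 1 else 0)" using f by blast
      ultimately have "(if n \<in> B then 1 else 0) = (1::nat)" by (rule eval_det[rotated])
      then show "n \<in> B" by (cases "n \<in> B") auto
    qed
    then show "B \<in> (\<lambda>f. {n. eval X f [n] 1}) ` UNIV" by blast
  qed
  then show ?thesis by (rule countable_subset) simp
qed

lemma rat_code_surj: "\<exists>n. rat_code n = real_of_rat q"
proof -
  obtain a b where ab: "quotient_of q = (a, b)" by (cases "quotient_of q") auto
  have b: "b > 0" using quotient_of_denom_pos[OF ab] .
  have q: "q = of_int a / of_int b" using quotient_of_div[OF ab] .
  let ?n = "prod_encode (int_encode a, nat b - 1)"
  have "Suc (nat b - 1) = nat b" using b by simp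
  then have bb: "real (Suc (nat b - 1)) = of_int b" using b by simp
  have "rat_code ?n = of_int a / real (Suc (nat b - 1))"
    unfolding rat_code_def prod_encode_inverse by (simp only: prod.case int_encode_inverse)
  also have "\<dots> = of_int a / of_int b" by (simp only: bb)
  also have "\<dots> = real_of_rat q" unfolding q of_rat_divide of_rat_of_int_eq ..
  finally show ?thesis by blast
qed

lemma real_cut_inj: "inj real_cut"
proof (rule injI, rule ccontr)
  fix x y :: real assume eq: "real_cut x = real_cut y" and ne: "x \<noteq> y"
  have "\<exists>n. (rat_code n < x) \<noteq> (rat_code n < y)"
  proof (cases "x < y")
    case True
    then obtain q where "x < real_of_rat q" "real_of_rat q < y" using of_rat_dense by blast
    moreover obtain n where "rat_code n = real_of_rat q" using rat_code_surj by blast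
    ultimately have "(rat_code n < x) \<noteq> (rat_code n < y)" by simp
    then show ?thesis by blast
  next
    case False
    then have "y < x" using ne by auto
    then obtain q where "y < real_of_rat q" "real_of_rat q < x" using of_rat_dense by blast
    moreover obtain n where "rat_code n = real_of_rat q" using rat_code_surj by blast
    ultimately have "(rat_code n < x) \<noteq> (rat_code n < y)" by simp
    then show ?thesis by blast
  qed
  then show False using eq unfolding real_cut_def by auto
qed

lemma countable_degree_reals:
  assumes "d \<in> turing_degrees" shows "countable {x. tdeg x = d}"
proof -
  obtain X where d: "d = degree_of_set X" using assms unfolding turing_degrees_def by auto
  have "real_cut ` {x. tdeg x = d} \<subseteq> {B. turing_le B X}"
  proof
    fix B assume "B \<in> real_cut ` {x. tdeg x = d}"
    then obtain x where x: "tdeg x = d" "B = real_cut x" by auto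
    have "real_cut x \<in> degree_of_set (real_cut x)"
      unfolding degree_of_set_def turing_equiv_def using turing_le_refl by auto
    then have "B \<in> d" using x unfolding tdeg_def by simp
    then show "B \<in> {B. turing_le B X}" using d unfolding degree_of_set_def turing_equiv_def by auto
  qed
  then have "countable (real_cut ` {x. tdeg x = d})" using countable_below countable_subset by blast
  then show ?thesis by (rule countable_image_inj_on) (rule inj_on_subset[OF real_cut_inj subset_UNIV])
qed



lemma gap_countable:
  fixes Dm :: "real set"
  shows "countable {x\<in>Dm. \<exists>e>0. \<forall>d\<in>Dm. \<not> (x - e < d \<and> d < x)}" (is "countable ?B")
proof -
  define \<rho> where "\<rho> x = (SOME q. q \<in> \<rat> \<and> (\<exists>e>0. (\<forall>d\<in>Dm. \<not> (x - e < d \<and> d < x)) \<and> x - e < q \<and> q < x))" for x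
  have \<rho>: "\<rho> x \<in> \<rat> \<and> (\<exists>e>0. (\<forall>d\<in>Dm. \<not> (x - e < d \<and> d < x)) \<and> x - e < \<rho> x \<and> \<rho> x < x)" if "x \<in> ?B" for x
  proof -
    from that obtain e where e: "e > 0" "\<forall>d\<in>Dm. \<not> (x - e < d \<and> d < x)" by blast
    obtain q where "q \<in> \<rat>" "x - e < q" "q < x" using Rats_dense_in_real[of "x - e" x] e by auto
    then have "\<exists>q. q \<in> \<rat> \<and> (\<exists>e>0. (\<forall>d\<in>Dm. \<not> (x - e < d \<and> d < x)) \<and> x - e < q \<and> q < x)"
      using e by blast
    then show ?thesis unfolding \<rho>_def by (rule someI_ex)
  qed
  have inj: "inj_on \<rho> ?B"
  proof (rule inj_onI, rule ccontr)
    fix x y assume x: "x \<in> ?B" and y: "y \<in> ?B" and eq: "\<rho> x = \<rho> y" and ne: "x \<noteq> y"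
    have *: False if a: "a \<in> ?B" "b \<in> ?B" "\<rho> a = \<rho> b" "a < b" for a b
    proof -
      obtain e where e: "\<forall>d\<in>Dm. \<not> (b - e < d \<and> d < b)" "b - e < \<rho> b" using \<rho>[OF a(2)] by blast
      have "\<rho> a < a" using \<rho>[OF a(1)] by blast
      have "a \<in> Dm" using a(1) by simp
      have "b - e < a" using e(2) a(3) \<open>\<rho> a < a\<close> by linarith
      then show False using e(1) \<open>a \<in> Dm\<close> a(4) by blast
    qed
    show False
    proof (cases "x < y")
      case True then show False using *[of x y] x y eq by blast
    next
      case False then have "y < x" using ne by linarith
      then show False using *[of y x] x y eq by simp
    qed
  qed
  have "\<rho> ` ?B \<subseteq> \<rat>" using \<rho> by blast
  then have "countable (\<rho> ` ?B)" using countable_rat countable_subset by blast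
  then show ?thesis using inj by (rule countable_image_inj_on)
qed

lemma density_lemma:
  fixes Dm :: "real set"
  shows "\<exists>D0 \<subseteq> Dm. countable D0 \<and>
     countable {x\<in>Dm. \<not> (\<forall>e>0. \<exists>d\<in>D0. x - e < d \<and> d < x)}"
proof -
  define pick where "pick pq = (SOME d. d \<in> Dm \<and> real_of_rat (fst pq) < d \<and> d < real_of_rat (snd pq))" for pq :: "rat \<times> rat"
  define D0 where "D0 = pick ` {pq. \<exists>d\<in>Dm. real_of_rat (fst pq) < d \<and> d < real_of_rat (snd pq)}"
  have pick: "pick pq \<in> Dm \<and> real_of_rat (fst pq) < pick pq \<and> pick pq < real_of_rat (snd pq)"
    if "\<exists>d\<in>Dm. real_of_rat (fst pq) < d \<and> d < real_of_rat (snd pq)" for pq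
    using that unfolding pick_def by (metis (mono_tags, lifting) someI_ex)
  have sub: "D0 \<subseteq> Dm" unfolding D0_def using pick by blast
  have cnt: "countable D0" unfolding D0_def by (rule countable_image) (rule countable_subset[OF subset_UNIV], simp)
  have "{x\<in>Dm. \<not> (\<forall>e>0. \<exists>d\<in>D0. x - e < d \<and> d < x)} \<subseteq> {x\<in>Dm. \<exists>e>0. \<forall>d\<in>Dm. \<not> (x - e < d \<and> d < x)}"
  proof safe
    fix x e assume x: "x \<in> Dm" and e: "e > 0" "\<not> (\<exists>d\<in>D0. x - e < d \<and> d < x)"
    show "\<exists>e>0. \<forall>d\<in>Dm. \<not> (x - e < d \<and> d < x)"
    proof (intro exI[of _ e] conjI ballI notI e(1))
      fix d assume d: "d \<in> Dm" "x - e < d \<and> d < x"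
      obtain p where p: "x - e < real_of_rat p" "real_of_rat p < d" using of_rat_dense d by blast
      obtain q where q: "d < real_of_rat q" "real_of_rat q < x" using of_rat_dense d by blast
      have ex: "\<exists>d\<in>Dm. real_of_rat (fst (p,q)) < d \<and> d < real_of_rat (snd (p,q))" using d p q by auto
      from pick[OF ex] have "pick (p,q) \<in> D0" "x - e < pick (p,q)" "pick (p,q) < x"
        unfolding D0_def using ex p q by auto
      then show False using e by blast
    qed
  qed
  then have "countable {x\<in>Dm. \<not> (\<forall>e>0. \<exists>d\<in>D0. x - e < d \<and> d < x)}"
    using gap_countable countable_subset by blast
  then show ?thesis using sub cnt by blast
qed

lemma sup_good:
  fixes x :: real
  assumes "\<forall>e>0. \<exists>d\<in>D0. x - e < d \<and> d < x"
  shows "Sup {d\<in>D0. d < x} = x"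
proof (rule cSup_eq_non_empty)
  show "{d \<in> D0. d < x} \<noteq> {}" using assms[rule_format, of 1] by auto
  show "\<And>d. d \<in> {d \<in> D0. d < x} \<Longrightarrow> d \<le> x" by auto
  fix y assume y: "\<And>d. d \<in> {d \<in> D0. d < x} \<Longrightarrow> d \<le> y"
  show "x \<le> y"
  proof (rule ccontr)
    assume "\<not> x \<le> y"
    then obtain d where "d \<in> D0" "x - (x - y) < d" "d < x" using assms[rule_format, of "x - y"] by auto
    then show False using y[of d] by auto
  qed
qed

definition relS :: "bool \<Rightarrow> real \<Rightarrow> real \<Rightarrow> bool" where
  "relS s a b = (if s then a < b else b < a)"

definition Phi :: "(nat \<Rightarrow> real \<times> real) \<times> bool \<Rightarrow> real \<Rightarrow> real" where
  "Phi qs y = Sup {fst (fst qs n) | n. relS (snd qs) (snd (fst qs n)) y}"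

definition monoS :: "bool \<Rightarrow> (real \<times> real) set \<Rightarrow> bool" where
  "monoS s P = (\<forall>p\<in>P. \<forall>q\<in>P. fst p < fst q \<longrightarrow> relS s (snd p) (snd q))"

lemma lemma_L:
  assumes inj: "inj_on fst P" and mono: "monoS s P"
  shows "\<exists>q. countable {p\<in>P. fst p \<noteq> Phi (q, s) (snd p)}"
proof -
  obtain D0 where D0: "D0 \<subseteq> fst ` P" "countable D0"
    "countable {x\<in>fst ` P. \<not> (\<forall>e>0. \<exists>d\<in>D0. x - e < d \<and> d < x)}"
    using density_lemma[of "fst ` P"] by blast
  define C where "C = {c\<in>P. fst c \<in> D0}"
  have "countable C"
  proof -
    have "fst ` C \<subseteq> D0" unfolding C_def by auto
    then have "countable (fst ` C)" using D0(2) countable_subset by blast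
    moreover have "inj_on fst C" using inj unfolding C_def by (rule inj_on_subset) auto
    ultimately show ?thesis by (rule countable_image_inj_on)
  qed
  define q :: "nat \<Rightarrow> real \<times> real" where "q = from_nat_into C"
  have q: "C \<noteq> {} \<Longrightarrow> range q = C"
    unfolding q_def using range_from_nat_into[OF _ \<open>countable C\<close>] by simp
  define Bad where "Bad = {x\<in>fst ` P. \<not> (\<forall>e>0. \<exists>d\<in>D0. x - e < d \<and> d < x)}"
  have asym: "\<not> (relS s a b \<and> relS s b a)" for a b unfolding relS_def by auto
  have irr: "\<not> relS s a a" for a unfolding relS_def by auto
  have "{p\<in>P. fst p \<noteq> Phi (q, s) (snd p)} \<subseteq> {p\<in>P. fst p \<in> Bad}"
  proof safe
    fix a b assume p: "(a, b) \<in> P" and ne: "fst (a, b) \<noteq> Phi (q, s) (snd (a, b))"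
    show "fst (a, b) \<in> Bad"
    proof (rule ccontr)
      assume nb: "fst (a, b) \<notin> Bad"
      have "a \<in> fst ` P" using p by (rule image_eqI[rotated]) simp
      then have good: "\<forall>e>0. \<exists>d\<in>D0. a - e < d \<and> d < a" using nb unfolding Bad_def by simp
      have "\<exists>d\<in>D0. a - 1 < d \<and> d < a" using good by simp
      then obtain d0 where "d0 \<in> D0" "d0 < a" by blast
      then obtain c0 where "c0 \<in> P" "fst c0 = d0" using D0(1) by blast
      then have "C \<noteq> {}" using \<open>d0 \<in> D0\<close> unfolding C_def by blast
      then have rq: "range q = C" using q by blast
      have "{fst (q n) | n. relS s (snd (q n)) b} = {fst c | c. c \<in> C \<and> relS s (snd c) b}"
        unfolding rq[symmetric] by blast
      also have "\<dots> = {d\<in>D0. d < a}"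
      proof (intro set_eqI iffI)
        fix d assume "d \<in> {fst c | c. c \<in> C \<and> relS s (snd c) b}"
        then obtain c where c: "c \<in> P" "fst c \<in> D0" "relS s (snd c) b" "d = fst c" unfolding C_def by auto
        have "fst c \<noteq> a"
        proof
          assume "fst c = a"
          then have "c = (a, b)" using inj p c(1) by (metis fst_conv inj_onD)
          then show False using c(3) irr by simp
        qed
        moreover have "\<not> a < fst c"
        proof
          assume "a < fst c"
          then have "relS s (snd (a, b)) (snd c)" using mono[unfolded monoS_def, rule_format, OF p c(1)] by simp
          then have "relS s b (snd c)" by simp
          then show False using c(3) asym by blast
        qed
        ultimately show "d \<in> {d\<in>D0. d < a}" using c by auto
      next
        fix d assume d: "d \<in> {d\<in>D0. d < a}"
        then obtain c where c: "c \<in> P" "d = fst c" using D0(1) by auto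
        have "fst c < fst (a, b)" using c d by simp
        then have "relS s (snd c) (snd (a, b))" using mono[unfolded monoS_def, rule_format, OF c(1) p] by simp
        then have "relS s (snd c) b" by simp
        moreover have "c \<in> C" using c d unfolding C_def by auto
        ultimately show "d \<in> {fst c | c. c \<in> C \<and> relS s (snd c) b}" using c(2) by blast
      qed
      finally have "Phi (q, s) b = a" unfolding Phi_def using sup_good[OF good] by simp
      then show False using ne by simp
    qed
  qed
  moreover have "countable {p\<in>P. fst p \<in> Bad}"
  proof -
    have "fst ` {p\<in>P. fst p \<in> Bad} \<subseteq> Bad" by auto
    then have "countable (fst ` {p\<in>P. fst p \<in> Bad})" using D0(3) countable_subset unfolding Bad_def by blast
    moreover have "inj_on fst {p\<in>P. fst p \<in> Bad}" using inj by (rule inj_on_subset) auto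
    ultimately show ?thesis by (rule countable_image_inj_on)
  qed
  ultimately show ?thesis using countable_subset by blast
qed



unbundle cardinal_syntax


definition small :: "'a set \<Rightarrow> bool" where
  "small X \<longleftrightarrow> |X| <o |UNIV :: real set|"

lemma lepoll_ordLeq: "A \<lesssim> B \<Longrightarrow> |A| \<le>o |B|"
  unfolding lepoll_def using card_of_ordLeq by blast

lemma small_lepoll: "Y \<lesssim> X \<Longrightarrow> small X \<Longrightarrow> small Y"
  unfolding small_def using lepoll_ordLeq ordLeq_ordLess_trans by blast

lemma small_subset: "Y \<subseteq> X \<Longrightarrow> small X \<Longrightarrow> small Y"
  using small_lepoll subset_imp_lepoll by blast

lemma small_image: "small X \<Longrightarrow> small (f ` X)"
  using small_lepoll image_lepoll by blast

lemma small_nat: "small (UNIV :: nat set)"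
proof -
  have "\<not> (\<exists>f::real \<Rightarrow> nat. inj_on f UNIV \<and> f ` UNIV \<subseteq> UNIV)"
    using uncountable_UNIV_real unfolding countable_def by blast
  then show ?thesis unfolding small_def using card_of_ordLess by blast
qed

lemma countable_small: "countable X \<Longrightarrow> small X"
proof -
  assume "countable X"
  then obtain f :: "_ \<Rightarrow> nat" where "inj_on f X" unfolding countable_def by blast
  then have "X \<lesssim> (UNIV :: nat set)" unfolding lepoll_def by blast
  then show ?thesis using small_nat small_lepoll by blast
qed

lemma infinite_real: "infinite (UNIV :: real set)"
  using uncountable_UNIV_real countable_finite by blast

lemma small_Un: "small X \<Longrightarrow> small Y \<Longrightarrow> small (X \<union> Y)"
  unfolding small_def using card_of_Un_ordLess_infinite[OF infinite_real] by blast

lemma small_Times_aux: "|A| \<le>o |B| \<Longrightarrow> small B \<Longrightarrow> small (A \<times> B)"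
proof -
  assume AB: "|A| \<le>o |B|" and B: "small B"
  show ?thesis
  proof (cases "finite B")
    case True
    then have "finite A" using AB card_of_ordLeq_finite by blast
    then have "finite (A \<times> B)" using True by simp
    then show ?thesis unfolding small_def
      using finite_ordLess_infinite[OF card_of_Well_order card_of_Well_order] infinite_real
      by (simp add: Field_card_of)
  next
    case False
    have "|A \<times> B| \<le>o |B|"
      using card_of_Times_ordLeq_infinite_Field[of "|B|" A B] False AB
      by (simp add: Field_card_of card_of_card_order_on card_of_mono1)
    then show ?thesis using B unfolding small_def using ordLeq_ordLess_trans by blast
  qed
qed

lemma small_Times: "small A \<Longrightarrow> small B \<Longrightarrow> small (A \<times> B)"
proof -
  assume A: "small A" and B: "small B"
  show ?thesis
  proof (cases "|A| \<le>o |B|")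
    case True then show ?thesis using small_Times_aux B by blast
  next
    case False
    then have "|B| \<le>o |A|" using ordLeq_total[OF card_of_Well_order card_of_Well_order, of A B] by blast
    then have BA: "small (B \<times> A)" using A by (rule small_Times_aux)
    have "A \<times> B \<lesssim> B \<times> A" by (rule eqpoll_imp_lepoll[OF times_commute_eqpoll])
    then show ?thesis using BA by (rule small_lepoll)
  qed
qed

lemma small_UN_countable:
  assumes "small U" "\<And>b. b \<in> U \<Longrightarrow> countable (F b)"
  shows "small (\<Union>b\<in>U. F b)"
proof -
  have "(\<Union>b\<in>U. F b) \<subseteq> (\<lambda>(b, n). from_nat_into (F b) n) ` (U \<times> (UNIV :: nat set))"
  proof
    fix x assume "x \<in> (\<Union>b\<in>U. F b)"
    then obtain b where b: "b \<in> U" "x \<in> F b" by blast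
    then have "x \<in> range (from_nat_into (F b))" using range_from_nat_into[of "F b"] assms(2) by blast
    then obtain n where "x = from_nat_into (F b) n" by blast
    moreover have "(b, n) \<in> U \<times> (UNIV :: nat set)" using b by simp
    ultimately show "x \<in> (\<lambda>(b, n). from_nat_into (F b) n) ` (U \<times> (UNIV :: nat set))"
      by (intro image_eqI[of _ _ "(b, n)"]) simp_all
  qed
  moreover have "small ((\<lambda>(b, n). from_nat_into (F b) n) ` (U \<times> (UNIV :: nat set)))"
    using small_image small_Times assms(1) small_nat by blast
  ultimately show ?thesis using small_subset by blast
qed

lemma not_small_eqpoll: "X \<approx> (UNIV :: real set) \<Longrightarrow> \<not> small X"
  unfolding small_def eqpoll_iff_card_of_ordIso using not_ordLess_ordIso by blast

lemma T_lepoll: "(UNIV :: ((nat \<Rightarrow> real \<times> real) \<times> bool) set) \<lesssim> (UNIV :: real set)"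
proof -
  define j0 :: "(nat \<Rightarrow> real \<times> real) \<times> bool \<Rightarrow> nat \<Rightarrow> real" where
    "j0 t n = (case n of 0 \<Rightarrow> (if snd t then 1 else 0)
       | Suc m \<Rightarrow> (if even m then fst (fst t (m div 2)) else snd (fst t (m div 2))))" for t n
  have "inj j0"
  proof (rule injI)
    fix t t' assume eq: "j0 t = j0 t'"
    obtain q b where t1: "t = (q, b)" by (cases t)
    obtain q' b' where t2: "t' = (q', b')" by (cases t')
    note t = t1 t2
    have "(if b then 1 else 0::real) = (if b' then 1 else 0)" using fun_cong[OF eq, of 0] unfolding j0_def t by simp
    then have "b = b'" by (cases b; cases b') simp_all
    moreover have "q = q'"
    proof
      fix k
      have "fst (q k) = fst (q' k)" using fun_cong[OF eq, of "Suc (2 * k)"] unfolding j0_def t by simp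
      moreover have "snd (q k) = snd (q' k)" using fun_cong[OF eq, of "Suc (Suc (2 * k))"] unfolding j0_def t by simp
      ultimately show "q k = q' k" by (simp add: prod_eq_iff)
    qed
    ultimately show "t = t'" using t by simp
  qed
  then have 1: "(UNIV :: ((nat \<Rightarrow> real \<times> real) \<times> bool) set) \<lesssim> (UNIV :: (nat \<Rightarrow> real) set)"
    unfolding lepoll_def by blast
  have "inj (\<lambda>f::nat \<Rightarrow> real. real_cut \<circ> f)"
  proof (rule injI)
    fix f g :: "nat \<Rightarrow> real" assume eq: "real_cut \<circ> f = real_cut \<circ> g"
    show "f = g"
    proof
      fix x have "real_cut (f x) = real_cut (g x)" using fun_cong[OF eq, of x] by simp
      then show "f x = g x" using real_cut_inj by (rule injD[rotated])
    qed
  qed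
  then have 2: "(UNIV :: (nat \<Rightarrow> real) set) \<lesssim> (UNIV :: (nat \<Rightarrow> nat set) set)"
    unfolding lepoll_def by blast
  have "inj (\<lambda>F::nat \<Rightarrow> nat set. prod_encode ` (SIGMA i:UNIV. F i))"
  proof (rule injI)
    fix F G :: "nat \<Rightarrow> nat set"
    assume eq: "prod_encode ` (SIGMA i:UNIV. F i) = prod_encode ` (SIGMA i:UNIV. G i)"
    have "n \<in> F i \<longleftrightarrow> n \<in> G i" for i n
    proof -
      have "n \<in> F i \<longleftrightarrow> prod_encode (i, n) \<in> prod_encode ` (SIGMA i:UNIV. F i)"
        by (simp add: inj_image_mem_iff inj_prod_encode)
      also have "\<dots> \<longleftrightarrow> prod_encode (i, n) \<in> prod_encode ` (SIGMA i:UNIV. G i)" using eq by simp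
      also have "\<dots> \<longleftrightarrow> n \<in> G i" by (simp add: inj_image_mem_iff inj_prod_encode)
      finally show ?thesis .
    qed
    then show "F = G" by blast
  qed
  then have 3: "(UNIV :: (nat \<Rightarrow> nat set) set) \<lesssim> (UNIV :: nat set set)"
    unfolding lepoll_def by blast
  have 4: "(UNIV :: nat set set) \<lesssim> (UNIV :: real set)"
    using nat_sets_eqpoll_reals eqpoll_imp_lepoll by blast
  show ?thesis by (rule lepoll_trans[OF lepoll_trans[OF lepoll_trans[OF 1 2] 3] 4])
qed


lemma r0_facts:
  defines "r0 \<equiv> |UNIV :: real set|"
  shows "(a, a) \<in> r0" and "(a, b) \<in> r0 \<Longrightarrow> (b, c) \<in> r0 \<Longrightarrow> (a, c) \<in> r0"
    and "(a, b) \<in> r0 \<Longrightarrow> (b, a) \<in> r0 \<Longrightarrow> a = b"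
    and "(a, b) \<in> r0 \<or> (b, a) \<in> r0" and "wf (r0 - Id)" and "small (underS r0 a)"
    and "small (under r0 a)"
proof -
  have wo: "well_order_on UNIV r0" unfolding r0_def by (rule card_of_well_order_on)
  then have lo: "linear_order_on UNIV r0" and w: "wf (r0 - Id)" unfolding well_order_on_def by auto
  then have po: "partial_order_on UNIV r0" and tot: "total_on UNIV r0" unfolding linear_order_on_def by auto
  then have pre: "preorder_on UNIV r0" and anti: "antisym r0" unfolding partial_order_on_def by auto
  then have rf: "refl_on UNIV r0" and tr: "trans r0" unfolding preorder_on_def by auto
  show "(a, a) \<in> r0" using rf unfolding refl_on_def by auto
  show "(a, b) \<in> r0 \<Longrightarrow> (b, c) \<in> r0 \<Longrightarrow> (a, c) \<in> r0" using tr unfolding trans_def by blast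
  show "(a, b) \<in> r0 \<Longrightarrow> (b, a) \<in> r0 \<Longrightarrow> a = b" using anti unfolding antisym_def by blast
  show "(a, b) \<in> r0 \<or> (b, a) \<in> r0" using tot rf unfolding total_on_def refl_on_def by (cases "a = b") auto
  show "wf (r0 - Id)" by (rule w)
  have "|underS r0 a| <o r0" unfolding r0_def
    by (rule card_of_underS[OF card_of_Card_order]) (simp add: Field_card_of)
  then show su: "small (underS r0 a)" unfolding small_def r0_def .
  have "under r0 a \<subseteq> underS r0 a \<union> {a}" unfolding under_def underS_def by auto
  moreover have "small (underS r0 a \<union> {a})" using su countable_small[of "{a}"] small_Un by blast
  ultimately show "small (under r0 a)" by (rule small_subset)
qed

theorem mainTheorem10:
  fixes \<A> :: "nat set set set"
  assumes "\<A> \<subseteq> turing_degrees"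
    and "\<A> \<approx> (UNIV :: real set)"
  shows "\<exists>\<S> \<subseteq> \<A>. \<S> \<approx> (UNIV :: real set) \<and>
    (\<forall>P :: (real \<times> real) set.
        P \<subseteq> reals_of_degrees \<S> \<times> reals_of_degrees \<S>
      \<and> P \<approx> (UNIV :: real set)
      \<and> (\<forall>(x, y) \<in> P. x \<noteq> y \<and> tdeg x \<noteq> tdeg y)
      \<and> (\<forall>p \<in> P. \<forall>q \<in> P. p \<noteq> q \<longrightarrow> {fst p, snd p} \<inter> {fst q, snd q} = {})
      \<longrightarrow> (\<exists>(x1, y1) \<in> P. \<exists>(x2, y2) \<in> P. x1 < x2 \<and> y1 < y2)
        \<and> (\<exists>(w1, z1) \<in> P. \<exists>(w2, z2) \<in> P. w1 < w2 \<and> z1 > z2))"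
proof -
  note AT = assms(1) and Aeq = assms(2)
  define r0 where "r0 = |UNIV :: real set|"
  note rf = r0_facts(1)[folded r0_def] and tr = r0_facts(2)[folded r0_def]
    and an = r0_facts(3)[folded r0_def] and tot = r0_facts(4)[folded r0_def]
    and wfr = r0_facts(5)[folded r0_def] and smU = r0_facts(6)[folded r0_def]
    and smu = r0_facts(7)[folded r0_def]
  obtain j :: "(nat \<Rightarrow> real \<times> real) \<times> bool \<Rightarrow> real" where inj_j: "inj j"
    using T_lepoll unfolding lepoll_def by blast
  define e where "e = inv j"
  have ej: "e (j t) = t" for t unfolding e_def using inj_j by simp
  define Excl where "Excl g a = g ` underS r0 a \<union>
      (\<lambda>(b, x). tdeg (Phi (e b) x)) ` (underS r0 a \<times> {x. tdeg x \<in> g ` underS r0 a \<inter> \<A>})"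
    for g :: "real \<Rightarrow> nat set set" and a
  define Fch where "Fch g a = (SOME d. d \<in> \<A> \<and> d \<notin> Excl g a)" for g a
  define D where "D = wfrec (r0 - Id) Fch"
  have Excl_cong: "Excl g a = Excl g' a" if "\<And>b. b \<in> underS r0 a \<Longrightarrow> g b = g' b" for g g' a
  proof -
    have "g ` underS r0 a = g' ` underS r0 a" using that by (rule image_cong[OF refl])
    then show ?thesis unfolding Excl_def by simp
  qed
  have small_Excl: "small (Excl g a)" for g a
  proof -
    have 1: "small (g ` underS r0 a)" using smU by (rule small_image)
    have "{x. tdeg x \<in> g ` underS r0 a \<inter> \<A>} = (\<Union>d\<in>g ` underS r0 a \<inter> \<A>. {x. tdeg x = d})" by auto
    moreover have "small (\<Union>d\<in>g ` underS r0 a \<inter> \<A>. {x. tdeg x = d})"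
    proof (rule small_UN_countable)
      show "small (g ` underS r0 a \<inter> \<A>)" using 1 by (rule small_subset[rotated]) auto
      show "countable {x. tdeg x = d}" if "d \<in> g ` underS r0 a \<inter> \<A>" for d
        using that AT by (intro countable_degree_reals) auto
    qed
    ultimately have "small {x. tdeg x \<in> g ` underS r0 a \<inter> \<A>}" by simp
    then have "small (underS r0 a \<times> {x. tdeg x \<in> g ` underS r0 a \<inter> \<A>})" using smU by (intro small_Times)
    then have "small ((\<lambda>(b, x). tdeg (Phi (e b) x)) ` (underS r0 a \<times> {x. tdeg x \<in> g ` underS r0 a \<inter> \<A>}))"
      by (rule small_image)
    then show ?thesis unfolding Excl_def using 1 by (intro small_Un)
  qed
  have ex_choice: "\<exists>d. d \<in> \<A> \<and> d \<notin> Excl g a" for g a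
  proof (rule ccontr)
    assume "\<not> ?thesis"
    then have "\<A> \<subseteq> Excl g a" by blast
    then have "small \<A>" using small_Excl by (rule small_subset)
    then show False using not_small_eqpoll[OF Aeq] by blast
  qed
  have D_eq: "D a = Fch D a" for a
  proof -
    have "D a = Fch (cut D (r0 - Id) a) a" unfolding D_def by (rule wfrec[OF wfr])
    also have "Fch (cut D (r0 - Id) a) a = Fch D a"
    proof -
      have "Excl (cut D (r0 - Id) a) a = Excl D a"
        by (rule Excl_cong) (simp add: cut_def underS_def)
      then show ?thesis unfolding Fch_def by simp
    qed
    finally show ?thesis .
  qed
  have D_prop: "D a \<in> \<A> \<and> D a \<notin> Excl D a" for a
    unfolding D_eq[of a] Fch_def using ex_choice[of D a] by (rule someI_ex)
  have key: "tdeg (Phi (e b) v) \<noteq> D \<gamma>" if "b \<in> underS r0 \<gamma>" "\<delta> \<in> underS r0 \<gamma>" "tdeg v = D \<delta>" for b v \<gamma> \<delta>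
  proof -
    have "tdeg v \<in> D ` underS r0 \<gamma> \<inter> \<A>" using that D_prop[of \<delta>] by auto
    then have "(b, v) \<in> underS r0 \<gamma> \<times> {x. tdeg x \<in> D ` underS r0 \<gamma> \<inter> \<A>}" using that(1) by simp
    then have "tdeg (Phi (e b) v) \<in> Excl D \<gamma>" unfolding Excl_def
      by (intro UnI2 image_eqI[of _ _ "(b, v)"]) simp_all
    moreover have "D \<gamma> \<notin> Excl D \<gamma>" using D_prop[of \<gamma>] by simp
    ultimately show ?thesis by auto
  qed
  have inj_D: "inj D"
  proof (rule injI, rule ccontr)
    fix a b assume eq: "D a = D b" and ne: "a \<noteq> b"
    have *: False if "(x, y) \<in> r0" "x \<noteq> y" "D x = D y" for x y
    proof -
      have "x \<in> underS r0 y" using that unfolding underS_def by simp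
      then have "D x \<in> Excl D y" unfolding Excl_def by blast
      then show False using D_prop[of y] that(3) by simp
    qed
    show False
    proof (cases "(a, b) \<in> r0")
      case True then show False using *[of a b] eq ne by simp
    next
      case False then have "(b, a) \<in> r0" using tot[of a b] by simp
      then show False using *[of b a] eq ne by simp
    qed
  qed
  define S where "S = range D"
  have "S \<subseteq> \<A>" unfolding S_def using D_prop by blast
  moreover have "S \<approx> (UNIV :: real set)"
  proof -
    have "bij_betw D UNIV S" unfolding S_def using inj_D by (simp add: bij_betw_def)
    then have "(UNIV :: real set) \<approx> S" unfolding eqpoll_def by blast
    then show ?thesis by (rule eqpoll_sym)
  qed
  moreover have "(\<exists>(x1, y1) \<in> P. \<exists>(x2, y2) \<in> P. x1 < x2 \<and> y1 < y2)
        \<and> (\<exists>(w1, z1) \<in> P. \<exists>(w2, z2) \<in> P. w1 < w2 \<and> z1 > z2)"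
    if PS: "P \<subseteq> reals_of_degrees S \<times> reals_of_degrees S" and Peq: "P \<approx> (UNIV :: real set)"
      and Pdeg: "\<forall>(x, y) \<in> P. x \<noteq> y \<and> tdeg x \<noteq> tdeg y"
      and Pdisj: "\<forall>p \<in> P. \<forall>q \<in> P. p \<noteq> q \<longrightarrow> {fst p, snd p} \<inter> {fst q, snd q} = {}"
    for P :: "(real \<times> real) set"
  proof -
    have injfst: "inj_on fst P"
    proof (rule inj_onI, rule ccontr)
      fix p q assume "p \<in> P" "q \<in> P" "fst p = fst q" "p \<noteq> q"
      then show False using Pdisj by blast
    qed
    have injsnd: "inj_on snd P"
    proof (rule inj_onI, rule ccontr)
      fix p q assume "p \<in> P" "q \<in> P" "snd p = snd q" "p \<noteq> q"
      then show False using Pdisj by blast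
    qed
    have sndne: "snd p \<noteq> snd q" if "p \<in> P" "q \<in> P" "fst p < fst q" for p q
    proof
      assume "snd p = snd q"
      then show False using inj_onD[OF injsnd _ that(1,2)] that(3) by auto
    qed
    have no_mono: False if mono: "monoS s P" for s
    proof -
      define P' where "P' = prod.swap ` P"
      have injfst': "inj_on fst P'" unfolding P'_def using injsnd
        by (auto simp: inj_on_def)
      have mono': "monoS s P'"
        unfolding monoS_def
      proof (intro ballI impI)
        fix p' q' assume "p' \<in> P'" "q' \<in> P'" and lt: "fst p' < fst q'"
        then obtain p q where pq: "p \<in> P" "q \<in> P" "p' = prod.swap p" "q' = prod.swap q"
          unfolding P'_def by blast
        have lt2: "snd p < snd q" using lt pq by simp
        have "fst p \<noteq> fst q"
        proof
          assume "fst p = fst q"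
          then show False using inj_onD[OF injfst _ pq(1,2)] lt2 by auto
        qed
        then consider "fst p < fst q" | "fst q < fst p" by linarith
        then have "relS s (fst p) (fst q)"
        proof cases
          case 1
          then have "relS s (snd p) (snd q)" using mono pq unfolding monoS_def by blast
          then show ?thesis using 1 lt2 unfolding relS_def by (cases s) auto
        next
          case 2
          then have "relS s (snd q) (snd p)" using mono pq unfolding monoS_def by blast
          then show ?thesis using 2 lt2 unfolding relS_def by (cases s) auto
        qed
        then show "relS s (snd p') (snd q')" using pq by simp
      qed
      obtain q1 where B1: "countable {p\<in>P. fst p \<noteq> Phi (q1, s) (snd p)}"
        using lemma_L[OF injfst mono] by blast
      obtain q2 where B2': "countable {p\<in>P'. fst p \<noteq> Phi (q2, s) (snd p)}"
        using lemma_L[OF injfst' mono'] by blast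
      have "{p\<in>P. snd p \<noteq> Phi (q2, s) (fst p)} \<subseteq> prod.swap ` {p\<in>P'. fst p \<noteq> Phi (q2, s) (snd p)}"
      proof
        fix p assume p: "p \<in> {p\<in>P. snd p \<noteq> Phi (q2, s) (fst p)}"
        then have "prod.swap p \<in> {p\<in>P'. fst p \<noteq> Phi (q2, s) (snd p)}" unfolding P'_def by auto
        then show "p \<in> prod.swap ` {p\<in>P'. fst p \<noteq> Phi (q2, s) (snd p)}"
          by (intro image_eqI[of _ _ "prod.swap p"]) simp_all
      qed
      moreover have "countable (prod.swap ` {p\<in>P'. fst p \<noteq> Phi (q2, s) (snd p)})"
        using B2' by (rule countable_image)
      ultimately have B2: "countable {p\<in>P. snd p \<noteq> Phi (q2, s) (fst p)}"
        by (rule countable_subset)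
      define \<beta>1 where "\<beta>1 = j (q1, s)"
      define \<beta>2 where "\<beta>2 = j (q2, s)"
      define \<beta> where "\<beta> = (if (\<beta>1, \<beta>2) \<in> r0 then \<beta>2 else \<beta>1)"
      have b1: "(\<beta>1, \<beta>) \<in> r0" and b2: "(\<beta>2, \<beta>) \<in> r0"
        unfolding \<beta>_def using rf tot[of \<beta>1 \<beta>2] by auto
      define N where "N = {p\<in>P. tdeg (fst p) \<in> D ` under r0 \<beta>}"
      have "small N"
      proof -
        have "fst ` N \<subseteq> (\<Union>d\<in>D ` under r0 \<beta>. {x. tdeg x = d})" unfolding N_def by auto
        moreover have "small (\<Union>d\<in>D ` under r0 \<beta>. {x. tdeg x = d})"
        proof (rule small_UN_countable)
          show "small (D ` under r0 \<beta>)" using smu by (rule small_image)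
          show "countable {x. tdeg x = d}" if "d \<in> D ` under r0 \<beta>" for d
            using that AT D_prop by (intro countable_degree_reals) blast
        qed
        ultimately have "small (fst ` N)" by (rule small_subset)
        moreover have "N \<lesssim> fst ` N" unfolding lepoll_def
        proof (intro exI conjI)
          show "inj_on fst N" using injfst unfolding N_def by (rule inj_on_subset) auto
        qed simp
        ultimately show ?thesis by (rule small_lepoll[rotated])
      qed
      have "small ({p\<in>P. fst p \<noteq> Phi (q1, s) (snd p)} \<union> {p\<in>P. snd p \<noteq> Phi (q2, s) (fst p)} \<union> N)"
        by (intro small_Un countable_small B1 B2 \<open>small N\<close>)
      moreover have "\<not> small P" using not_small_eqpoll[OF Peq] .
      ultimately have "\<not> P \<subseteq> {p\<in>P. fst p \<noteq> Phi (q1, s) (snd p)} \<union> {p\<in>P. snd p \<noteq> Phi (q2, s) (fst p)} \<union> N"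
        using small_subset by blast
      then obtain p where p: "p \<in> P" "fst p = Phi (q1, s) (snd p)" "snd p = Phi (q2, s) (fst p)"
        "p \<notin> N"
        by blast
      obtain x y where xy: "p = (x, y)" by (cases p)
      have "x \<in> reals_of_degrees S" "y \<in> reals_of_degrees S" using PS p(1) xy by auto
      then obtain \<gamma> \<delta> where gd: "tdeg x = D \<gamma>" "tdeg y = D \<delta>"
        unfolding reals_of_degrees_def S_def by auto
      have "tdeg x \<noteq> tdeg y" using Pdeg p(1) xy by auto
      then have "\<gamma> \<noteq> \<delta>" using gd by auto
      have g_not: "\<gamma> \<notin> under r0 \<beta>" using p(1,4) xy gd unfolding N_def by auto
      then have bg: "(\<beta>, \<gamma>) \<in> r0" using tot[of \<beta> \<gamma>] unfolding under_def by auto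
      consider "(\<delta>, \<gamma>) \<in> r0" | "(\<gamma>, \<delta>) \<in> r0" using tot by blast
      then show False
      proof cases
        case 1
        have "\<delta> \<in> underS r0 \<gamma>" using 1 \<open>\<gamma> \<noteq> \<delta>\<close> unfolding underS_def by auto
        moreover have "\<beta>1 \<in> underS r0 \<gamma>"
        proof -
          have "(\<beta>1, \<gamma>) \<in> r0" using tr[OF b1 bg] .
          moreover have "\<beta>1 \<noteq> \<gamma>" using b1 g_not unfolding under_def by auto
          ultimately show ?thesis unfolding underS_def by auto
        qed
        ultimately have "tdeg (Phi (e \<beta>1) y) \<noteq> D \<gamma>" using key gd(2) by blast
        moreover have "Phi (e \<beta>1) y = x" using p(2) xy unfolding \<beta>1_def ej by simp
        ultimately show False using gd(1) by simp
      next
        case 2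
        have d_not: "\<delta> \<notin> under r0 \<beta>"
        proof
          assume "\<delta> \<in> under r0 \<beta>"
          then have "(\<gamma>, \<beta>) \<in> r0" using tr[OF 2] unfolding under_def by auto
          then show False using g_not unfolding under_def by auto
        qed
        then have bd: "(\<beta>, \<delta>) \<in> r0" using tot[of \<beta> \<delta>] unfolding under_def by auto
        have "\<gamma> \<in> underS r0 \<delta>" using 2 \<open>\<gamma> \<noteq> \<delta>\<close> unfolding underS_def by auto
        moreover have "\<beta>2 \<in> underS r0 \<delta>"
        proof -
          have "(\<beta>2, \<delta>) \<in> r0" using tr[OF b2 bd] .
          moreover have "\<beta>2 \<noteq> \<delta>" using b2 d_not unfolding under_def by auto
          ultimately show ?thesis unfolding underS_def by auto
        qed
        ultimately have "tdeg (Phi (e \<beta>2) x) \<noteq> D \<delta>" using key gd(1) by blast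
        moreover have "Phi (e \<beta>2) x = y" using p(3) xy unfolding \<beta>2_def ej by simp
        ultimately show False using gd(2) by simp
      qed
    qed
    show ?thesis
    proof (rule ccontr)
      assume neg: "\<not> ?thesis"
      show False
      proof (cases "\<exists>(x1, y1) \<in> P. \<exists>(x2, y2) \<in> P. x1 < x2 \<and> y1 < y2")
        case True
        then have nB: "\<not> (\<exists>(w1, z1) \<in> P. \<exists>(w2, z2) \<in> P. w1 < w2 \<and> z1 > z2)" using neg by blast
        have "monoS True P" unfolding monoS_def relS_def
        proof (intro ballI impI)
          fix p q assume "p \<in> P" "q \<in> P" "fst p < fst q"
          moreover have "snd p \<noteq> snd q" using sndne calculation by simp
          moreover have "\<not> snd p > snd q"
          proof
            assume "snd p > snd q"
            then have "\<exists>(w1, z1) \<in> P. \<exists>(w2, z2) \<in> P. w1 < w2 \<and> z1 > z2"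
              using \<open>p \<in> P\<close> \<open>q \<in> P\<close> \<open>fst p < fst q\<close>
              by (intro bexI[of _ p] bexI[of _ q]) (auto simp: case_prod_beta)
            then show False using nB by simp
          qed
          ultimately show "if True then snd p < snd q else snd q < snd p" by simp
        qed
        then show False by (rule no_mono)
      next
        case False
        have "monoS False P" unfolding monoS_def relS_def
        proof (intro ballI impI)
          fix p q assume "p \<in> P" "q \<in> P" "fst p < fst q"
          moreover have "snd p \<noteq> snd q" using sndne calculation by simp
          moreover have "\<not> snd p < snd q"
          proof
            assume "snd p < snd q"
            then have "\<exists>(x1, y1) \<in> P. \<exists>(x2, y2) \<in> P. x1 < x2 \<and> y1 < y2"
              using \<open>p \<in> P\<close> \<open>q \<in> P\<close> \<open>fst p < fst q\<close>
              by (intro bexI[of _ p] bexI[of _ q]) (auto simp: case_prod_beta)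
            then show False using False by simp
          qed
          ultimately show "if False then snd p < snd q else snd q < snd p" by simp
        qed
        then show False by (rule no_mono)
      qed
    qed
  qed
  ultimately show ?thesis by (intro exI[of _ S] conjI allI impI) auto
qed

end
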